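(* For every mediator $m$ (respectively, advertiser $a$), the Threshold by Partition Mechanism is individually rational for $m$ (resp. $a$), and, for every fixed realization of the mechanism's random choices, truthfulness is a (weakly) dominant strategy for $m$ (resp. $a$).
   Context: Model: finite sets of users $P$ (costs $c(p)\ge0$), mediators $M$ (the sets $P(m)$ partition $P$), advertisers $A$ (private positive integer capacity $u(a)$ and private value $v(a)\ge0$); advertiser $a$ has $u(a)$ slots of value $v(a)$; $B$ is all slots, $B(A')$ the slots of advertisers in $A'$, $P(M')$ the users of mediators in $M'$. Mediator utility: payments received minus total cost of his assigned users; advertiser utility: $n\,v(a)-t$ when assigned $n\le u(a)$ users and charged $t$. Advertisers report capacity and value; mediators report any subset of their users with arbitrary costs (and an order on them); truthful = true report. IR: a truthful player's utility is non-negative. $\tau=|S_c(P,B)|>0$ and $\alpha\in[\tau^{-1},1]$ is known to the mechanism. Costs/values compared with a fixed report-independent tie-breaking rule making them all distinct. Canonical assignment $S_c(P',B')$: order slots by decreasing value $b_1,\dots$, users by increasing cost $p_1,\dots$; include $(p_i,b_i)$ iff $v(b_i)>c(p_i)$; location $i$ refers to $p_i,b_i$. Threshold by Partition Mechanism (on reports): (1) $M_L$ (resp. $A_L$) contains each mediator (advertiser) independently with probability $\min\{17\sqrt[3]{\alpha},1\}$; (2) report-independent orders $\sigma_M$, $\sigma_A$ placing $M_L$, $A_L$ last; (3) each mediator independently to $M_1$ or $M_2$ w.p. $1/2$, each advertiser to $A_1$ or $A_2$ w.p. $1/2$; (4) $\hat p,\hat b$ are the user and slot at location $\lceil(1-4\sqrt[3]{\alpha})|S_c(P(M_2),B(A_2))|\rceil$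 of $S_c(P(M_2),B(A_2))$, or, if $(1-4\sqrt[3]{\alpha})|S_c(P(M_2),B(A_2))|\le0$, a dummy user of cost $-\infty$ and dummy slot of value $\infty$; $\hat P=\{p\in P(M_1):c(p)<c(\hat p)\}$, $\hat B=\{b\in B(A_1):v(b)>v(\hat b)\}$; (5) while there are unassigned users in $\hat P$ and unassigned slots in $\hat B$: take the earliest mediator $m$ in $\sigma_M$ with an unassigned user in $\hat P$ and earliest advertiser $a$ in $\sigma_A$ with an unassigned slot in $\hat B$, assign the lowest-cost unassigned user of $\hat P\cap P(m)$ to an unassigned slot of $\hat B\cap B(a)$, charge $a$ the amount $v(\hat b)$ and pay $m$ the amount $c(\hat p)$. Steps (4)–(5) are repeated with indices 1 and 2 exchanged. *)

theory Defs
  imports Complex_Main "HOL-Library.Product_Lexorder" "HOL-Library.Extended_Real"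
begin

(* Users have type 'u, mediators 'm, advertisers 'a.  A slot is a pair (a, k) with k < capacity(a).
   rk is the fixed, report-independent tie-breaking rule: every number (cost or value) is
   compared together with the rank of the user / slot it belongs to, lexicographically.
   Hence "c(p) < c(q)" means ukey p < ukey q, and "v(b) > c(p)" means bkey b > ukey p. *)

type_synonym ('u,'a) item = "'u + ('a \<times> nat)"

definition ukey :: "(('u,'a) item \<Rightarrow> nat) \<Rightarrow> ('u \<Rightarrow> real) \<Rightarrow> 'u \<Rightarrow> real \<times> nat" where
  "ukey rk c p = (c p, rk (Inl p))"

definition bkey :: "(('u,'a) item \<Rightarrow> nat) \<Rightarrow> ('a \<Rightarrow> real) \<Rightarrow> 'a \<times> nat \<Rightarrow> real \<times> nat" where
  "bkey rk v b = (v (fst b), rk (Inr b))"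

definition slots :: "'a set \<Rightarrow> ('a \<Rightarrow> nat) \<Rightarrow> ('a \<times> nat) set" where
  "slots A' cap = {(a, k). a \<in> A' \<and> k < cap a}"

definition users_sorted :: "(('u,'a) item \<Rightarrow> nat) \<Rightarrow> ('u \<Rightarrow> real) \<Rightarrow> 'u set \<Rightarrow> 'u list" where
  "users_sorted rk c P' = sorted_key_list_of_set (ukey rk c) P'"

definition slots_sorted :: "(('u,'a) item \<Rightarrow> nat) \<Rightarrow> ('a \<Rightarrow> real) \<Rightarrow> ('a \<times> nat) set \<Rightarrow> ('a \<times> nat) list" where
  "slots_sorted rk v B' = rev (sorted_key_list_of_set (bkey rk v) B')"

definition Sc :: "(('u,'a) item \<Rightarrow> nat) \<Rightarrow> ('u \<Rightarrow> real) \<Rightarrow> ('a \<Rightarrow> real)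
                  \<Rightarrow> 'u set \<Rightarrow> ('a \<times> nat) set \<Rightarrow> ('u \<times> ('a \<times> nat)) list" where
  "Sc rk c v P' B' =
     filter (\<lambda>(p, b). ukey rk c p < bkey rk v b) (zip (users_sorted rk c P') (slots_sorted rk v B'))"

(* Steps (4)-(5) of the Threshold by Partition Mechanism for one side s, on the reports
   (reported users Pr with reported costs cr, reported capacities capr and values vr).
   Side s consists of the mediators m with sM m = s and advertisers a with sA a = s
   (s = True: M_1/A_1, s = False: M_2/A_2).
   Result: (list of assigned (user, slot) pairs, payment c(p^) per user, charge v(b^) per slot).
   The while-loop of step (5) matches, one by one, the users of P^ queued by the order sigma_M
   of their mediator (rankM) and, within a mediator, by increasing cost, with the slots of B^
   queued by the order sigma_A of their advertiser (rankA); it stops when one queue is empty.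
   This is exactly the zip of the two queues. *)
definition side_outcome ::
  "(('u,'a) item \<Rightarrow> nat) \<Rightarrow> real \<Rightarrow> ('u \<Rightarrow> 'm) \<Rightarrow> 'a set
   \<Rightarrow> ('m \<Rightarrow> nat) \<Rightarrow> ('a \<Rightarrow> nat) \<Rightarrow> ('m \<Rightarrow> bool) \<Rightarrow> ('a \<Rightarrow> bool)
   \<Rightarrow> 'u set \<Rightarrow> ('u \<Rightarrow> real) \<Rightarrow> ('a \<Rightarrow> nat) \<Rightarrow> ('a \<Rightarrow> real) \<Rightarrow> bool
   \<Rightarrow> ('u \<times> ('a \<times> nat)) list \<times> real \<times> real" where
  "side_outcome rk \<alpha> med A rankM rankA sM sA Pr cr capr vr s =
    (let B = slots A capr;
         L = Sc rk cr vr {p \<in> Pr. sM (med p) \<noteq> s} {b \<in> B. sA (fst b) \<noteq> s};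
         x = (1 - 4 * root 3 \<alpha>) * real (length L)
     in if x \<le> 0 then ([], 0, 0)
        else (let k = nat \<lceil>x\<rceil>;
                  ph = fst (L ! (k - 1)); bh = snd (L ! (k - 1));
                  Ph = {p \<in> Pr. sM (med p) = s \<and> ukey rk cr p < ukey rk cr ph};
                  Bh = {b \<in> B. sA (fst b) = s \<and> bkey rk vr b > bkey rk vr bh};
                  QU = sorted_key_list_of_set (\<lambda>p. (rankM (med p), ukey rk cr p)) Ph;
                  QB = sorted_key_list_of_set (\<lambda>b. (rankA (fst b), snd b)) Bh
              in (zip QU QB, cr ph, vr (fst bh))))"

(* a realization of the mechanism's random choices: M_L, A_L, orders sigma_M, sigma_A
   (given as injective ranks) placing M_L, A_L last; the partitions are given by sM, sA *)
definition valid_realization :: "'m set \<Rightarrow> 'a set \<Rightarrow> 'm set \<Rightarrow> 'a set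
     \<Rightarrow> ('m \<Rightarrow> nat) \<Rightarrow> ('a \<Rightarrow> nat) \<Rightarrow> bool" where
  "valid_realization M A ML AL rankM rankA \<longleftrightarrow>
     ML \<subseteq> M \<and> AL \<subseteq> A \<and> inj_on rankM M \<and> inj_on rankA A \<and>
     (\<forall>m\<in>M - ML. \<forall>m'\<in>ML. rankM m < rankM m') \<and>
     (\<forall>a\<in>A - AL. \<forall>a'\<in>AL. rankA a < rankA a')"

definition med_utility ::
  "(('u,'a) item \<Rightarrow> nat) \<Rightarrow> real \<Rightarrow> ('u \<Rightarrow> 'm) \<Rightarrow> 'a set
   \<Rightarrow> ('m \<Rightarrow> nat) \<Rightarrow> ('a \<Rightarrow> nat) \<Rightarrow> ('m \<Rightarrow> bool) \<Rightarrow> ('a \<Rightarrow> bool)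
   \<Rightarrow> 'u set \<Rightarrow> ('u \<Rightarrow> real) \<Rightarrow> ('a \<Rightarrow> nat) \<Rightarrow> ('a \<Rightarrow> real)
   \<Rightarrow> ('u \<Rightarrow> real) \<Rightarrow> 'm \<Rightarrow> real" where
  "med_utility rk \<alpha> med A rankM rankA sM sA Pr cr capr vr c m =
     (\<Sum>s\<in>{True, False}.
        (case side_outcome rk \<alpha> med A rankM rankA sM sA Pr cr capr vr s of
          (pairs, pay, charge) \<Rightarrow>
            sum_list (map (\<lambda>(p, b). pay - c p) (filter (\<lambda>(p, b). med p = m) pairs))))"

definition adv_count ::
  "(('u,'a) item \<Rightarrow> nat) \<Rightarrow> real \<Rightarrow> ('u \<Rightarrow> 'm) \<Rightarrow> 'a set
   \<Rightarrow> ('m \<Rightarrow> nat) \<Rightarrow> ('a \<Rightarrow> nat) \<Rightarrow> ('m \<Rightarrow> bool) \<Rightarrow> ('a \<Rightarrow> bool)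
   \<Rightarrow> 'u set \<Rightarrow> ('u \<Rightarrow> real) \<Rightarrow> ('a \<Rightarrow> nat) \<Rightarrow> ('a \<Rightarrow> real) \<Rightarrow> 'a \<Rightarrow> nat" where
  "adv_count rk \<alpha> med A rankM rankA sM sA Pr cr capr vr a =
     (\<Sum>s\<in>{True, False}.
        length (filter (\<lambda>(p, b). fst b = a) (fst (side_outcome rk \<alpha> med A rankM rankA sM sA Pr cr capr vr s))))"

definition adv_charge ::
  "(('u,'a) item \<Rightarrow> nat) \<Rightarrow> real \<Rightarrow> ('u \<Rightarrow> 'm) \<Rightarrow> 'a set
   \<Rightarrow> ('m \<Rightarrow> nat) \<Rightarrow> ('a \<Rightarrow> nat) \<Rightarrow> ('m \<Rightarrow> bool) \<Rightarrow> ('a \<Rightarrow> bool)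
   \<Rightarrow> 'u set \<Rightarrow> ('u \<Rightarrow> real) \<Rightarrow> ('a \<Rightarrow> nat) \<Rightarrow> ('a \<Rightarrow> real) \<Rightarrow> 'a \<Rightarrow> real" where
  "adv_charge rk \<alpha> med A rankM rankA sM sA Pr cr capr vr a =
     (\<Sum>s\<in>{True, False}.
        (case side_outcome rk \<alpha> med A rankM rankA sM sA Pr cr capr vr s of
          (pairs, pay, charge) \<Rightarrow> real (length (filter (\<lambda>(p, b). fst b = a) pairs)) * charge))"

definition adv_utility :: "nat \<Rightarrow> real \<Rightarrow> nat \<Rightarrow> real \<Rightarrow> ereal" where
  "adv_utility ua va n t = (if n \<le> ua then ereal (real n * va - t) else -\<infinity>)"

end

theory Submission
  imports Defs
begin


context linorder begin

lemma fik: "inj_on f X \<Longrightarrow> folding_insort_key (\<le>) (<) X (f :: 'b \<Rightarrow> 'a)"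
  by unfold_locales

lemma skl_props:
  fixes f :: "'b \<Rightarrow> 'a"
  assumes "finite X" "inj_on f X"
  shows "set (sorted_key_list_of_set f X) = X" "distinct (sorted_key_list_of_set f X)"
    "length (sorted_key_list_of_set f X) = card X"
    "sorted_wrt (<) (map f (sorted_key_list_of_set f X))"
proof -
  interpret folding_insort_key "(\<le>)" "(<)" X f using fik[OF assms(2)] .
  show "set (sorted_key_list_of_set f X) = X" using assms by simp
  show "distinct (sorted_key_list_of_set f X)"
    using distinct_sorted_key_list_of_set[of X] distinct_map by blast
  show "length (sorted_key_list_of_set f X) = card X" by simp
  show "sorted_wrt (<) (map f (sorted_key_list_of_set f X))" by simp
qed

lemma skl_cong:
  fixes f g :: "'b \<Rightarrow> 'a"
  assumes "finite X" "inj_on f X" "\<forall>x\<in>X. f x = g x"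
  shows "sorted_key_list_of_set f X = sorted_key_list_of_set g X"
proof -
  have ig: "inj_on g X" using assms(2,3) by (metis inj_on_cong)
  interpret folding_insort_key "(\<le>)" "(<)" X g using fik[OF ig] .
  let ?l = "sorted_key_list_of_set f X"
  have mg: "map g ?l = map f ?l" using assms skl_props(1)[OF assms(1,2)] by (auto intro!: map_cong)
  have "sorted_wrt (<) (map g ?l)" unfolding mg using skl_props(4)[OF assms(1,2)] .
  moreover have "set ?l = X" "length ?l = card X" using skl_props[OF assms(1,2)] by auto
  ultimately have "sorted_key_list_of_set g X = ?l"
    using sorted_key_list_of_set_unique[of X ?l] assms(1) by blast
  then show ?thesis by (rule sym)
qed

lemma skl_take:
  fixes f :: "'b \<Rightarrow> 'a"
  assumes "finite X" "inj_on f X"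
  shows "set (take n (sorted_key_list_of_set f X)) = {x\<in>X. card {y\<in>X. f y < f x} < n}"
proof -
  define l where "l = sorted_key_list_of_set f X"
  have P1: "set l = X" and P2: "distinct l" and P4: "sorted_wrt (<) (map f l)"
    using skl_props[OF assms] unfolding l_def by auto
  have mono: "f (l!i) < f (l!j)" if "i < j" "j < length l" for i j
    using P4 sorted_wrt_nth_less[of "(<)" "map f l" i j] that by simp
  have rank: "card {y\<in>X. f y < f (l!i)} = i" if "i < length l" for i
  proof -
    have eq: "{y\<in>X. f y < f (l!i)} = (\<lambda>j. l ! j) ` {..<i}"
    proof (intro set_eqI iffI)
      fix y assume "y \<in> {y\<in>X. f y < f (l!i)}"
      then have yy: "y \<in> set l" "f y < f (l!i)" using P1 by auto
      then obtain j where j: "j < length l" "l ! j = y" by (auto simp: in_set_conv_nth)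
      have "j < i"
      proof (rule ccontr)
        assume "\<not> j < i"
        then have "i = j \<or> i < j" by linarith
        then show False
        proof
          assume "i = j" then show False using yy j by simp
        next
          assume "i < j" then have "f (l!i) < f (l!j)" using mono j(1) by blast
          then show False using yy j by simp
        qed
      qed
      then show "y \<in> (\<lambda>j. l ! j) ` {..<i}" using j by blast
    next
      fix y assume "y \<in> (\<lambda>j. l ! j) ` {..<i}"
      then obtain j where j: "j < i" "y = l ! j" by blast
      have "f (l!j) < f (l!i)" using mono[OF j(1) that] .
      moreover have "l ! j \<in> X" using P1 j(1) that nth_mem[of j l] by simp
      ultimately show "y \<in> {y\<in>X. f y < f (l!i)}" using j by blast
    qed
    have "inj_on (\<lambda>j. l ! j) {..<i}"
      using P2 that unfolding inj_on_def by (simp add: nth_eq_iff_index_eq)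
    then show ?thesis unfolding eq by (simp add: card_image)
  qed
  show ?thesis unfolding l_def[symmetric]
  proof (intro set_eqI iffI)
    fix x assume xin: "x \<in> set (take n l)"
    then obtain i where i: "i < length l" "i < n" "l ! i = x"
      by (auto simp: in_set_conv_nth)
    have "x \<in> X" using i P1 nth_mem by blast
    then show "x \<in> {x\<in>X. card {y\<in>X. f y < f x} < n}" using rank[OF i(1)] i by simp
  next
    fix x assume xin: "x \<in> {x\<in>X. card {y\<in>X. f y < f x} < n}"
    then have "x \<in> set l" using P1 by simp
    then obtain i where i: "i < length l" "l ! i = x" by (auto simp: in_set_conv_nth)
    have "i < n" using rank[OF i(1)] i xin by simp
    then show "x \<in> set (take n l)" using i by (auto simp: in_set_conv_nth intro!: exI[of _ i])
  qed
qed

lemma skl_take_card: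
  fixes f :: "'b \<Rightarrow> 'a"
  assumes "finite X" "inj_on f X"
  shows "card {x\<in>X. card {y\<in>X. f y < f x} < n} = min n (card X)"
proof -
  note P = skl_props[OF assms]
  have "card (set (take n (sorted_key_list_of_set f X))) = min n (card X)"
    using P by (simp add: distinct_card)
  then show ?thesis using skl_take[OF assms] by simp
qed

end


lemma block_rank:
  fixes r :: "'g \<Rightarrow> nat" and h :: "'x \<Rightarrow> 'k::linorder"
  assumes "finite X" "inj_on r (grp ` X)"
  shows "{x\<in>X. grp x = G \<and> card {y\<in>X. (r (grp y), h y) < (r (grp x), h x)} < n}
       = {x\<in>{z\<in>X. grp z = G}. card {y\<in>{z\<in>X. grp z = G}. h y < h x} < n - card {y\<in>X. r (grp y) < r G}}"
proof (intro set_eqI iffI)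
  have key: "card {y\<in>X. (r (grp y), h y) < (r (grp x), h x)}
        = card {y\<in>X. r (grp y) < r G} + card {y\<in>{z\<in>X. grp z = G}. h y < h x}"
    if "x \<in> X" "grp x = G" for x
  proof -
    have "{y\<in>X. (r (grp y), h y) < (r (grp x), h x)} = {y\<in>X. r (grp y) < r G} \<union> {y\<in>{z\<in>X. grp z = G}. h y < h x}"
      using that assms(2) by (auto simp: less_prod_def' inj_on_def)
    moreover have "{y\<in>X. r (grp y) < r G} \<inter> {y\<in>{z\<in>X. grp z = G}. h y < h x} = {}" by auto
    ultimately show ?thesis using assms(1) by (simp add: card_Un_disjoint)
  qed
  fix x
  { assume "x \<in> {x\<in>X. grp x = G \<and> card {y\<in>X. (r (grp y), h y) < (r (grp x), h x)} < n}"
    then show "x \<in> {x\<in>{z\<in>X. grp z = G}. card {y\<in>{z\<in>X. grp z = G}. h y < h x} < n - card {y\<in>X. r (grp y) < r G}}"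
      using key by auto }
  { assume "x \<in> {x\<in>{z\<in>X. grp z = G}. card {y\<in>{z\<in>X. grp z = G}. h y < h x} < n - card {y\<in>X. r (grp y) < r G}}"
    then show "x \<in> {x\<in>X. grp x = G \<and> card {y\<in>X. (r (grp y), h y) < (r (grp x), h x)} < n}"
      using key by auto }
qed

lemma sum_zip_filter:
  fixes g :: "'p \<Rightarrow> real"
  assumes "distinct xs"
  shows "sum_list (map (\<lambda>(p, b). g p) (filter (\<lambda>(p, b). Q p) (zip xs ys)))
       = (\<Sum>p\<in>{p\<in>set (take (length ys) xs). Q p}. g p)"
proof -
  have "sum_list (map (\<lambda>(p, b). g p) (filter (\<lambda>(p, b). Q p) (zip xs ys)))
      = sum_list (map g (filter Q (map fst (zip xs ys))))"
    by (induction xs ys rule: list_induct2') auto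
  also have "map fst (zip xs ys) = take (length ys) xs" by (simp add: map_fst_zip_take min_def)
  also have "sum_list (map g (filter Q (take (length ys) xs))) = (\<Sum>p\<in>{p\<in>set (take (length ys) xs). Q p}. g p)"
    using assms by (subst sum_list_distinct_conv_sum_set) (auto intro: distinct_take)
  finally show ?thesis .
qed

lemma len_zip_filter:
  assumes "distinct ys"
  shows "length (filter (\<lambda>(p, b). Q b) (zip xs ys)) = card {b\<in>set (take (length xs) ys). Q b}"
proof -
  have "length (filter (\<lambda>(p, b). Q b) (zip xs ys)) = length (filter Q (map snd (zip xs ys)))"
    by (induction xs ys rule: list_induct2') auto
  also have "map snd (zip xs ys) = take (length xs) ys" by (simp add: map_snd_zip_take min_def)
  also have "length (filter Q (take (length xs) ys)) = card {b\<in>set (take (length xs) ys). Q b}"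
    using assms by (metis distinct_filter distinct_take distinct_card set_filter)
  finally show ?thesis .
qed

lemma topN:
  fixes g :: "'x \<Rightarrow> real"
  assumes "finite X" "S \<subseteq> X" "T \<subseteq> X" "card S \<le> card T"
    "\<forall>x\<in>T. \<forall>y\<in>X - T. g y \<le> g x" "\<forall>x\<in>X. 0 \<le> g x"
  shows "sum g S \<le> sum g T"
proof (cases "S - T = {}")
  case True
  then have "S \<subseteq> T" by auto
  then show ?thesis using assms by (intro sum_mono2) (auto intro: finite_subset)
next
  case False
  have fS: "finite S" "finite T" using assms(1,2,3) finite_subset by blast+
  define t where "t = Max (g ` (S - T))"
  have ft: "finite (S - T)" using fS by auto
  have le_t: "\<forall>y\<in>S - T. g y \<le> t" unfolding t_def using ft by auto
  have t_in: "t \<in> g ` (S - T)" unfolding t_def using ft False by (intro Max_in) auto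
  have t_le: "\<forall>x\<in>T - S. t \<le> g x" using t_in assms(2,5) by auto
  have t0: "0 \<le> t" using t_in assms(2,6) by auto
  have c: "card (S - T) \<le> card (T - S)"
  proof -
    have "card S = card (S \<inter> T) + card (S - T)" using fS(1) by (rule card_Int_Diff)
    moreover have "card T = card (T \<inter> S) + card (T - S)" using fS(2) by (rule card_Int_Diff)
    moreover have "T \<inter> S = S \<inter> T" by auto
    ultimately show ?thesis using assms(4) by simp
  qed
  have "sum g (S - T) \<le> of_nat (card (S - T)) * t"
    using sum_bounded_above[of "S - T" g t] le_t by auto
  also have "\<dots> \<le> of_nat (card (T - S)) * t" using c t0 by (intro mult_right_mono) auto
  also have "\<dots> \<le> sum g (T - S)" using sum_bounded_below[of "T - S" t g] t_le by auto
  finally have "sum g (S - T) \<le> sum g (T - S)" .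
  moreover have "sum g S = sum g (S - T) + sum g (S \<inter> T)" using fS by (metis sum.Int_Diff add.commute)
  moreover have "sum g T = sum g (T - S) + sum g (S \<inter> T)" using fS by (metis sum.Int_Diff add.commute Int_commute)
  ultimately show ?thesis by linarith
qed

lemma ukey_inj:
  assumes "inj_on rk (Inl ` P \<union> Inr ` (A \<times> UNIV))" "X \<subseteq> P"
  shows "inj_on (ukey rk c) X"
  using assms unfolding inj_on_def ukey_def by blast

lemma bkey_inj:
  assumes "inj_on rk (Inl ` P \<union> Inr ` (A \<times> UNIV))" "X \<subseteq> A \<times> UNIV"
  shows "inj_on (bkey rk v) X"
  using assms unfolding inj_on_def bkey_def by blast

lemma slots_finite: "finite A \<Longrightarrow> finite (slots A cap)"
proof -
  assume "finite A"
  moreover have "slots A cap \<subseteq> (\<Union>a\<in>A. {a} \<times> {..<cap a})" unfolding slots_def by auto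
  moreover have "finite (\<Union>a\<in>A. {a} \<times> {..<cap a})" using \<open>finite A\<close> by auto
  ultimately show ?thesis using finite_subset by blast
qed

lemma slots_sub: "slots A cap \<subseteq> A \<times> UNIV" unfolding slots_def by auto



lemma skl_mem: "finite X \<Longrightarrow> inj_on f X \<Longrightarrow> x \<in> set (sorted_key_list_of_set f X) \<Longrightarrow> x \<in> X"
  using skl_props(1) by blast

lemma Sc_sub:
  assumes "finite P'" "finite B'" "inj_on (ukey rk c) P'" "inj_on (bkey rk v) B'"
  shows "set (Sc rk c v P' B') \<subseteq> P' \<times> B'"
proof
  fix z assume "z \<in> set (Sc rk c v P' B')"
  then have "z \<in> set (zip (users_sorted rk c P') (slots_sorted rk v B'))" unfolding Sc_def by auto
  then have "fst z \<in> set (users_sorted rk c P')" "snd z \<in> set (slots_sorted rk v B')"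
    by (metis prod.collapse set_zip_leftD, metis prod.collapse set_zip_rightD)
  then show "z \<in> P' \<times> B'" using assms skl_props(1)
    unfolding users_sorted_def slots_sorted_def by (metis mem_Sigma_iff prod.collapse set_rev)
qed

lemma Sc_cong:
  assumes "finite P'" "finite B'" "inj_on (ukey rk c) P'" "inj_on (bkey rk v) B'"
    "\<forall>p\<in>P'. c p = c2 p" "\<forall>b\<in>B'. v (fst b) = v2 (fst b)"
  shows "Sc rk c v P' B' = Sc rk c2 v2 P' B'"
proof -
  have u: "users_sorted rk c P' = users_sorted rk c2 P'"
    unfolding users_sorted_def using assms by (intro skl_cong) (auto simp: ukey_def)
  have b: "slots_sorted rk v B' = slots_sorted rk v2 B'"
    unfolding slots_sorted_def using assms by (subst skl_cong[of B' "bkey rk v" "bkey rk v2"]) (auto simp: bkey_def)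
  have "set (zip (users_sorted rk c P') (slots_sorted rk v B')) \<subseteq> P' \<times> B'"
  proof
    fix z assume "z \<in> set (zip (users_sorted rk c P') (slots_sorted rk v B'))"
    then have "fst z \<in> set (users_sorted rk c P')" "snd z \<in> set (slots_sorted rk v B')"
      by (metis prod.collapse set_zip_leftD, metis prod.collapse set_zip_rightD)
    then show "z \<in> P' \<times> B'" using assms skl_props(1)
      unfolding users_sorted_def slots_sorted_def by (metis mem_Sigma_iff prod.collapse set_rev)
  qed
  then show ?thesis unfolding Sc_def u[symmetric] b[symmetric]
  proof (intro filter_cong refl)
    fix z assume sub: "set (zip (users_sorted rk c P') (slots_sorted rk v B')) \<subseteq> P' \<times> B'"
      and z: "z \<in> set (zip (users_sorted rk c P') (slots_sorted rk v B'))"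
    obtain p q where zz: "z = (p, q)" by (cases z) blast
    have "p \<in> P'" "q \<in> B'" using sub z zz by auto
    then have "c p = c2 p" "v (fst q) = v2 (fst q)" using assms(5,6) by auto
    then show "(case z of (p, b) \<Rightarrow> ukey rk c p < bkey rk v b) = (case z of (p, b) \<Rightarrow> ukey rk c2 p < bkey rk v2 b)"
      using zz by (simp add: ukey_def bkey_def)
  qed
qed

lemma side_cases:
  fixes rk :: "('u,'a) item \<Rightarrow> nat" and cr :: "'u \<Rightarrow> real" and vr :: "'a \<Rightarrow> real"
    and Pr :: "'u set" and sM :: "'m \<Rightarrow> bool" and med :: "'u \<Rightarrow> 'm" and sA :: "'a \<Rightarrow> bool"
    and A :: "'a set" and capr :: "'a \<Rightarrow> nat" and s :: bool and \<alpha> :: real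
    and rankM :: "'m \<Rightarrow> nat" and rankA :: "'a \<Rightarrow> nat"
  defines "L \<equiv> Sc rk cr vr {p \<in> Pr. sM (med p) \<noteq> s} {b \<in> slots A capr. sA (fst b) \<noteq> s}"
  defines "x \<equiv> (1 - 4 * root 3 \<alpha>) * real (length L)"
  defines "ph \<equiv> fst (L ! (nat \<lceil>x\<rceil> - 1))" and "bh \<equiv> snd (L ! (nat \<lceil>x\<rceil> - 1))"
  shows "side_outcome rk \<alpha> med A rankM rankA sM sA Pr cr capr vr s =
    (if x \<le> 0 then ([], 0, 0) else
      (zip (sorted_key_list_of_set (\<lambda>p. (rankM (med p), ukey rk cr p)) {p \<in> Pr. sM (med p) = s \<and> ukey rk cr p < ukey rk cr ph})
           (sorted_key_list_of_set (\<lambda>b. (rankA (fst b), snd b)) {b \<in> slots A capr. sA (fst b) = s \<and> bkey rk vr b > bkey rk vr bh}),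
       cr ph, vr (fst bh)))"
  unfolding side_outcome_def Let_def L_def x_def ph_def bh_def ..

lemma side_shape:
  "\<exists>K K'. fst (side_outcome rk \<alpha> med A rankM rankA sM sA Pr cr capr vr s) = [] \<or>
     fst (side_outcome rk \<alpha> med A rankM rankA sM sA Pr cr capr vr s) =
       zip (sorted_key_list_of_set (\<lambda>p. (rankM (med p), ukey rk cr p)) {p \<in> Pr. sM (med p) = s \<and> ukey rk cr p < K})
           (sorted_key_list_of_set (\<lambda>b. (rankA (fst b), snd b)) {b \<in> slots A capr. sA (fst b) = s \<and> K' < bkey rk vr b})"
proof (cases "(1 - 4 * root 3 \<alpha>) * real (length (Sc rk cr vr {p \<in> Pr. sM (med p) \<noteq> s} {b \<in> slots A capr. sA (fst b) \<noteq> s})) \<le> 0")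
  case True
  then show ?thesis unfolding side_cases by (simp only: if_True fst_conv) blast
next
  case False
  then show ?thesis unfolding side_cases by (simp only: if_False fst_conv) blast
qed

lemma side_pairs_user:
  assumes "finite Pr" "inj_on (ukey rk cr) Pr"
    "(p, b) \<in> set (fst (side_outcome rk \<alpha> med A rankM rankA sM sA Pr cr capr vr s))"
  shows "p \<in> Pr \<and> sM (med p) = s"
proof -
  let ?f = "\<lambda>p. (rankM (med p), ukey rk cr p)"
  have gen: "p \<in> Pr \<and> sM (med p) = s" if "p \<in> set (sorted_key_list_of_set ?f {p \<in> Pr. sM (med p) = s \<and> ukey rk cr p < K})" for K
  proof -
    have "inj_on ?f {p \<in> Pr. sM (med p) = s \<and> ukey rk cr p < K}"
      using assms(2) unfolding inj_on_def by auto
    then show ?thesis using skl_mem[OF _ _ that] assms(1) by auto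
  qed
  obtain K K' where "fst (side_outcome rk \<alpha> med A rankM rankA sM sA Pr cr capr vr s) = [] \<or>
     fst (side_outcome rk \<alpha> med A rankM rankA sM sA Pr cr capr vr s) =
       zip (sorted_key_list_of_set (\<lambda>p. (rankM (med p), ukey rk cr p)) {p \<in> Pr. sM (med p) = s \<and> ukey rk cr p < K})
           (sorted_key_list_of_set (\<lambda>b. (rankA (fst b), snd b)) {b \<in> slots A capr. sA (fst b) = s \<and> K' < bkey rk vr b})"
    using side_shape by blast
  then have "(p, b) \<in> set (zip (sorted_key_list_of_set (\<lambda>p. (rankM (med p), ukey rk cr p)) {p \<in> Pr. sM (med p) = s \<and> ukey rk cr p < K})
           (sorted_key_list_of_set (\<lambda>b. (rankA (fst b), snd b)) {b \<in> slots A capr. sA (fst b) = s \<and> K' < bkey rk vr b}))"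
  proof
    assume "fst (side_outcome rk \<alpha> med A rankM rankA sM sA Pr cr capr vr s) = []"
    then show ?thesis using assms(3) by simp
  next
    assume "fst (side_outcome rk \<alpha> med A rankM rankA sM sA Pr cr capr vr s) =
       zip (sorted_key_list_of_set (\<lambda>p. (rankM (med p), ukey rk cr p)) {p \<in> Pr. sM (med p) = s \<and> ukey rk cr p < K})
           (sorted_key_list_of_set (\<lambda>b. (rankA (fst b), snd b)) {b \<in> slots A capr. sA (fst b) = s \<and> K' < bkey rk vr b})"
    then show ?thesis using assms(3) by simp
  qed
  then have "p \<in> set (sorted_key_list_of_set (\<lambda>p. (rankM (med p), ukey rk cr p)) {p \<in> Pr. sM (med p) = s \<and> ukey rk cr p < K})"
    by (rule set_zip_leftD)
  then show ?thesis by (rule gen)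
qed

lemma side_pairs_slot:
  assumes "finite A" "inj_on rankA A"
    "(p, b) \<in> set (fst (side_outcome rk \<alpha> med A rankM rankA sM sA Pr cr capr vr s))"
  shows "b \<in> slots A capr \<and> sA (fst b) = s"
proof -
  let ?f = "\<lambda>b. (rankA (fst b), snd b)"
  have gen: "b \<in> slots A capr \<and> sA (fst b) = s" if "b \<in> set (sorted_key_list_of_set ?f {b \<in> slots A capr. sA (fst b) = s \<and> K < bkey rk vr b})" for K
  proof -
    have "inj_on ?f {b \<in> slots A capr. sA (fst b) = s \<and> K < bkey rk vr b}"
      using assms(2) unfolding inj_on_def slots_def by auto
    then show ?thesis using skl_mem[OF _ _ that] slots_finite[OF assms(1)] by auto
  qed
  obtain K K' where "fst (side_outcome rk \<alpha> med A rankM rankA sM sA Pr cr capr vr s) = [] \<or>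
     fst (side_outcome rk \<alpha> med A rankM rankA sM sA Pr cr capr vr s) =
       zip (sorted_key_list_of_set (\<lambda>p. (rankM (med p), ukey rk cr p)) {p \<in> Pr. sM (med p) = s \<and> ukey rk cr p < K})
           (sorted_key_list_of_set (\<lambda>b. (rankA (fst b), snd b)) {b \<in> slots A capr. sA (fst b) = s \<and> K' < bkey rk vr b})"
    using side_shape by blast
  then have "(p, b) \<in> set (zip (sorted_key_list_of_set (\<lambda>p. (rankM (med p), ukey rk cr p)) {p \<in> Pr. sM (med p) = s \<and> ukey rk cr p < K})
           (sorted_key_list_of_set (\<lambda>b. (rankA (fst b), snd b)) {b \<in> slots A capr. sA (fst b) = s \<and> K' < bkey rk vr b}))"
  proof
    assume "fst (side_outcome rk \<alpha> med A rankM rankA sM sA Pr cr capr vr s) = []"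
    then show ?thesis using assms(3) by simp
  next
    assume "fst (side_outcome rk \<alpha> med A rankM rankA sM sA Pr cr capr vr s) =
       zip (sorted_key_list_of_set (\<lambda>p. (rankM (med p), ukey rk cr p)) {p \<in> Pr. sM (med p) = s \<and> ukey rk cr p < K})
           (sorted_key_list_of_set (\<lambda>b. (rankA (fst b), snd b)) {b \<in> slots A capr. sA (fst b) = s \<and> K' < bkey rk vr b})"
    then show ?thesis using assms(3) by simp
  qed
  then have "b \<in> set (sorted_key_list_of_set (\<lambda>b. (rankA (fst b), snd b)) {b \<in> slots A capr. sA (fst b) = s \<and> K' < bkey rk vr b})"
    by (rule set_zip_rightD)
  then show ?thesis by (rule gen)
qed



lemma sum_bool_split: "(\<Sum>s\<in>{True, False}. F s) = F s0 + F (\<not> s0)"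
  by (cases s0) (simp_all add: add.commute)

lemma rank_set_cong:
  assumes "\<forall>y\<in>D. f y = g y"
  shows "{x\<in>D. card {y\<in>D. f y < f x} < N} = {x\<in>D. card {y\<in>D. g y < g x} < N}"
proof -
  have "{y\<in>D. f y < f x} = {y\<in>D. g y < g x}" if "x \<in> D" for x using assms that by auto
  then show ?thesis by auto
qed

lemma idx_range:
  fixes \<alpha> :: real
  assumes "0 \<le> \<alpha>" "\<not> (1 - 4 * root 3 \<alpha>) * real l \<le> 0"
  shows "1 \<le> nat \<lceil>(1 - 4 * root 3 \<alpha>) * real l\<rceil>" "nat \<lceil>(1 - 4 * root 3 \<alpha>) * real l\<rceil> \<le> l"
proof -
  have r: "0 \<le> root 3 \<alpha>" using assms(1) by simp
  have "(1 - 4 * root 3 \<alpha>) * real l \<le> real l" using mult_right_mono[of "1 - 4 * root 3 \<alpha>" 1 "real l"] r by simp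
  then have "\<lceil>(1 - 4 * root 3 \<alpha>) * real l\<rceil> \<le> int l" by (simp add: ceiling_le_iff)
  then show "nat \<lceil>(1 - 4 * root 3 \<alpha>) * real l\<rceil> \<le> l" by linarith
  have "0 < \<lceil>(1 - 4 * root 3 \<alpha>) * real l\<rceil>" using assms(2) by simp
  then show "1 \<le> nat \<lceil>(1 - 4 * root 3 \<alpha>) * real l\<rceil>" by linarith
qed

lemma med_gen:
  fixes P :: "'u set" and c cr cm :: "'u \<Rightarrow> real" and med :: "'u \<Rightarrow> 'm" and M :: "'m set"
    and A :: "'a set" and \<alpha> :: real and rk :: "('u,'a) item \<Rightarrow> nat"
    and rankM :: "'m \<Rightarrow> nat" and rankA :: "'a \<Rightarrow> nat" and sM :: "'m \<Rightarrow> bool" and sA :: "'a \<Rightarrow> bool"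
    and Pr Rm :: "'u set" and capr :: "'a \<Rightarrow> nat" and vr :: "'a \<Rightarrow> real" and m :: 'm
  assumes finP: "finite P" and finA: "finite A" and medP: "med ` P \<subseteq> M"
    and rkinj: "inj_on rk (Inl ` P \<union> Inr ` (A \<times> UNIV))"
    and alpha: "0 \<le> \<alpha>" and injM: "inj_on rankM M"
    and Pr: "Pr \<subseteq> P" and Rm: "Rm \<subseteq> {p\<in>P. med p = m}"
  defines "s0 \<equiv> sM m"
  defines "Po \<equiv> {p\<in>Pr. med p \<noteq> m}"
  defines "L \<equiv> Sc rk cr vr {p\<in>Po. sM (med p) \<noteq> s0} {b\<in>slots A capr. sA (fst b) \<noteq> s0}"
  defines "x \<equiv> (1 - 4 * root 3 \<alpha>) * real (length L)"
  defines "ph \<equiv> fst (L ! (nat \<lceil>x\<rceil> - 1))"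
  defines "bh \<equiv> snd (L ! (nat \<lceil>x\<rceil> - 1))"
  defines "K \<equiv> ukey rk cr ph"
  defines "n \<equiv> length (sorted_key_list_of_set (\<lambda>b. (rankA (fst b), snd b)) {b\<in>slots A capr. sA (fst b) = s0 \<and> bkey rk vr b > bkey rk vr bh})"
  defines "E \<equiv> card {y\<in>Po. sM (med y) = s0 \<and> ukey rk cr y < K \<and> rankM (med y) < rankM m}"
  shows "med_utility rk \<alpha> med A rankM rankA sM sA (Po \<union> Rm) (\<lambda>p. if med p = m then cm p else cr p) capr vr c m
    = (if x \<le> 0 then 0 else
        (\<Sum>p\<in>{z\<in>{p\<in>Rm. ukey rk cm p < K}. card {y\<in>{p\<in>Rm. ukey rk cm p < K}. ukey rk cm y < ukey rk cm z} < n - E}. cr ph - c p))"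
proof -
  define Q where "Q = Po \<union> Rm"
  define cc where "cc = (\<lambda>p. if med p = m then cm p else cr p)"
  have QP: "Q \<subseteq> P" using Pr Rm unfolding Q_def Po_def by auto
  have fQ: "finite Q" using QP finP finite_subset by blast
  have injQ: "inj_on (ukey rk cc) Q" using ukey_inj[OF rkinj QP] .
  define W where "W s = (case side_outcome rk \<alpha> med A rankM rankA sM sA Q cc capr vr s of
          (pairs, pay, charge) \<Rightarrow>
            sum_list (map (\<lambda>(p, b). pay - c p) (filter (\<lambda>(p, b). med p = m) pairs)))" for s
  have mu: "med_utility rk \<alpha> med A rankM rankA sM sA Q cc capr vr c m = W s0 + W (\<not> s0)"
    unfolding med_utility_def W_def by (rule sum_bool_split)
  have W1: "W (\<not> s0) = 0"
  proof -
    obtain pairs pay ch where so: "side_outcome rk \<alpha> med A rankM rankA sM sA Q cc capr vr (\<not> s0) = (pairs, pay, ch)"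
      by (cases "side_outcome rk \<alpha> med A rankM rankA sM sA Q cc capr vr (\<not> s0)") auto
    have "\<forall>z\<in>set pairs. \<not> (case z of (p, b) \<Rightarrow> med p = m)"
    proof
      fix z assume z: "z \<in> set pairs"
      obtain p b where zz: "z = (p, b)" by (cases z) blast
      have "(p, b) \<in> set (fst (side_outcome rk \<alpha> med A rankM rankA sM sA Q cc capr vr (\<not> s0)))"
        using z zz so by simp
      then have "sM (med p) = (\<not> s0)" using side_pairs_user[OF fQ injQ] by blast
      then have "med p \<noteq> m" by (auto simp: s0_def)
      then show "\<not> (case z of (p, b) \<Rightarrow> med p = m)" using zz by simp
    qed
    then have "filter (\<lambda>(p, b). med p = m) pairs = []" by (rule filter_False)
    then show ?thesis unfolding W_def so by simp
  qed
  have Qo: "{p\<in>Q. sM (med p) \<noteq> s0} = {p\<in>Po. sM (med p) \<noteq> s0}"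
    using Rm unfolding Q_def s0_def by auto
  have finPo: "finite Po" using Pr finP unfolding Po_def by (auto intro: finite_subset)
  have fo: "finite {p\<in>Po. sM (med p) \<noteq> s0}" using finPo by auto
  have PoP: "Po \<subseteq> P" using Pr unfolding Po_def by auto
  have fso: "finite {b\<in>slots A capr. sA (fst b) \<noteq> s0}" using slots_finite[OF finA] by auto
  have Lq: "Sc rk cc vr {p\<in>Q. sM (med p) \<noteq> s0} {b\<in>slots A capr. sA (fst b) \<noteq> s0} = L"
    unfolding Qo L_def
  proof (rule Sc_cong[OF fo fso])
    have sub: "{p \<in> Po. sM (med p) \<noteq> s0} \<subseteq> P" using PoP by blast
    show "inj_on (ukey rk cc) {p \<in> Po. sM (med p) \<noteq> s0}" using ukey_inj[OF rkinj sub] .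
    show "inj_on (bkey rk vr) {b \<in> slots A capr. sA (fst b) \<noteq> s0}" using bkey_inj[OF rkinj, of "{b \<in> slots A capr. sA (fst b) \<noteq> s0}"] slots_sub[of A capr] by blast
    show "\<forall>p\<in>{p \<in> Po. sM (med p) \<noteq> s0}. cc p = cr p" unfolding cc_def Po_def by auto
  qed auto
  have so: "side_outcome rk \<alpha> med A rankM rankA sM sA Q cc capr vr s0 =
    (if x \<le> 0 then ([], 0, 0) else
      (zip (sorted_key_list_of_set (\<lambda>p. (rankM (med p), ukey rk cc p)) {p \<in> Q. sM (med p) = s0 \<and> ukey rk cc p < ukey rk cc ph})
           (sorted_key_list_of_set (\<lambda>b. (rankA (fst b), snd b)) {b \<in> slots A capr. sA (fst b) = s0 \<and> bkey rk vr b > bkey rk vr bh}),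
       cc ph, vr (fst bh)))"
    unfolding side_cases Lq x_def ph_def bh_def ..
  define DM where "DM = {p\<in>Rm. ukey rk cm p < K}"
  have W0: "W s0 = (if x \<le> 0 then 0 else
        (\<Sum>p\<in>{z\<in>DM. card {y\<in>DM. ukey rk cm y < ukey rk cm z} < n - E}. cr ph - c p))"
  proof (cases "x \<le> 0")
    case True then show ?thesis unfolding W_def so by simp
  next
    case False
    have k1: "1 \<le> nat \<lceil>x\<rceil>" "nat \<lceil>x\<rceil> \<le> length L"
      using idx_range[OF alpha False[unfolded x_def]] unfolding x_def by auto
    have "L ! (nat \<lceil>x\<rceil> - 1) \<in> set L" using k1 by (intro nth_mem) linarith
    moreover have "set L \<subseteq> {p\<in>Po. sM (med p) \<noteq> s0} \<times> {b\<in>slots A capr. sA (fst b) \<noteq> s0}"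
      unfolding L_def
    proof (rule Sc_sub[OF fo fso])
      have sub: "{p \<in> Po. sM (med p) \<noteq> s0} \<subseteq> P" using PoP by blast
      show "inj_on (ukey rk cr) {p \<in> Po. sM (med p) \<noteq> s0}" using ukey_inj[OF rkinj sub] .
      show "inj_on (bkey rk vr) {b \<in> slots A capr. sA (fst b) \<noteq> s0}"
        using bkey_inj[OF rkinj, of "{b \<in> slots A capr. sA (fst b) \<noteq> s0}"] slots_sub[of A capr] by blast
    qed
    ultimately have phPo: "ph \<in> Po" "sM (med ph) \<noteq> s0" unfolding ph_def by auto
    then have mph: "med ph \<noteq> m" unfolding s0_def by auto
    have ccph: "cc ph = cr ph" using mph unfolding cc_def by simp
    have Kph: "ukey rk cc ph = K" unfolding K_def ukey_def ccph ..
    define Ph where "Ph = {p \<in> Q. sM (med p) = s0 \<and> ukey rk cc p < K}"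
    define fq where "fq = (\<lambda>p. (rankM (med p), ukey rk cc p))"
    define QBt where "QBt = sorted_key_list_of_set (\<lambda>b. (rankA (fst b), snd b)) {b \<in> slots A capr. sA (fst b) = s0 \<and> bkey rk vr b > bkey rk vr bh}"
    have nq: "n = length QBt" unfolding n_def QBt_def ..
    have fPh: "finite Ph" using fQ unfolding Ph_def by auto
    have injPh: "inj_on fq Ph" using injQ unfolding fq_def Ph_def inj_on_def by auto
    have W2: "W s0 = sum_list (map (\<lambda>(p, b). cr ph - c p) (filter (\<lambda>(p, b). med p = m) (zip (sorted_key_list_of_set fq Ph) QBt)))"
      unfolding W_def so Ph_def fq_def QBt_def Kph ccph using False by simp
    also have "\<dots> = (\<Sum>p\<in>{p\<in>set (take n (sorted_key_list_of_set fq Ph)). med p = m}. cr ph - c p)"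
      unfolding nq by (rule sum_zip_filter) (rule skl_props(2)[OF fPh injPh])
    also have "{p\<in>set (take n (sorted_key_list_of_set fq Ph)). med p = m}
       = {z\<in>Ph. med z = m \<and> card {y\<in>Ph. (rankM (med y), ukey rk cc y) < (rankM (med z), ukey rk cc z)} < n}"
      by (subst skl_take[OF fPh injPh]) (auto simp: fq_def)
    also have "\<dots> = {z\<in>{w\<in>Ph. med w = m}. card {y\<in>{w\<in>Ph. med w = m}. ukey rk cc y < ukey rk cc z} < n - card {y\<in>Ph. rankM (med y) < rankM m}}"
    proof (rule block_rank[OF fPh])
      have "med ` Ph \<subseteq> M" using medP QP unfolding Ph_def by auto
      then show "inj_on rankM (med ` Ph)" using injM inj_on_subset by blast
    qed
    also have "{w\<in>Ph. med w = m} = DM"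
      using Rm unfolding Ph_def DM_def Q_def Po_def cc_def ukey_def s0_def by auto
    also have "card {y\<in>Ph. rankM (med y) < rankM m} = E"
    proof -
      have "{y\<in>Ph. rankM (med y) < rankM m} = {y\<in>Po. sM (med y) = s0 \<and> ukey rk cr y < K \<and> rankM (med y) < rankM m}"
        using Rm unfolding Ph_def Q_def Po_def cc_def ukey_def by auto
      then show ?thesis unfolding E_def by simp
    qed
    also have "{z\<in>DM. card {y\<in>DM. ukey rk cc y < ukey rk cc z} < n - E} = {z\<in>DM. card {y\<in>DM. ukey rk cm y < ukey rk cm z} < n - E}"
      by (rule rank_set_cong) (use Rm in \<open>auto simp: DM_def cc_def ukey_def\<close>)
    finally show ?thesis using False by simp
  qed
  show ?thesis using mu W1 W0 unfolding Q_def cc_def DM_def by simp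
qed
lemma med_ineq:
  fixes P R :: "'u set" and c c' cr :: "'u \<Rightarrow> real" and rk :: "('u,'a) item \<Rightarrow> nat"
    and ph :: 'u and med :: "'u \<Rightarrow> 'm" and m :: 'm and N :: nat and A :: "'a set"
  assumes finP: "finite P" and rkinj: "inj_on rk (Inl ` P \<union> Inr ` (A \<times> UNIV))"
    and R: "R \<subseteq> {p\<in>P. med p = m}"
  defines "K \<equiv> ukey rk cr ph"
  defines "TM \<equiv> {p\<in>{p\<in>P. med p = m}. ukey rk c p < K}"
  defines "DM \<equiv> {p\<in>R. ukey rk c' p < K}"
  defines "MT \<equiv> {z\<in>TM. card {y\<in>TM. ukey rk c y < ukey rk c z} < N}"
  defines "MD \<equiv> {z\<in>DM. card {y\<in>DM. ukey rk c' y < ukey rk c' z} < N}"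
  shows "0 \<le> (\<Sum>p\<in>MT. cr ph - c p) \<and> (\<Sum>p\<in>MD. cr ph - c p) \<le> (\<Sum>p\<in>MT. cr ph - c p)"
proof -
  define g where "g p = cr ph - c p" for p
  have TMP: "TM \<subseteq> P" unfolding TM_def by auto
  have DMP: "DM \<subseteq> P" using R unfolding DM_def by auto
  have fTM: "finite TM" using TMP finP finite_subset by blast
  have fDM: "finite DM" using DMP finP finite_subset by blast
  have iTM: "inj_on (ukey rk c) TM" by (rule ukey_inj[OF rkinj TMP])
  have iDM: "inj_on (ukey rk c') DM" by (rule ukey_inj[OF rkinj DMP])
  have cMT: "card MT = min N (card TM)" unfolding MT_def by (rule skl_take_card[OF fTM iTM])
  have cMD: "card MD = min N (card DM)" unfolding MD_def by (rule skl_take_card[OF fDM iDM])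
  have MTs: "MT \<subseteq> TM" unfolding MT_def by auto
  have MDs: "MD \<subseteq> DM" unfolding MD_def by auto
  have fMD: "finite MD" using MDs fDM finite_subset by blast
  have nn: "\<forall>p\<in>TM. 0 \<le> g p"
  proof
    fix p assume "p \<in> TM"
    then have "ukey rk c p < ukey rk cr ph" unfolding TM_def K_def by auto
    then have "c p \<le> cr ph" unfolding ukey_def by auto
    then show "0 \<le> g p" unfolding g_def by simp
  qed
  have np: "\<forall>p\<in>MD - TM. g p \<le> 0"
  proof
    fix p assume p: "p \<in> MD - TM"
    then have "p \<in> P" "med p = m" using MDs R unfolding DM_def by auto
    then have "\<not> ukey rk c p < ukey rk cr ph" using p unfolding TM_def K_def by auto
    then have "cr ph \<le> c p" unfolding ukey_def by auto
    then show "g p \<le> 0" unfolding g_def by simp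
  qed
  have dom: "\<forall>x\<in>MT. \<forall>y\<in>TM - MT. g y \<le> g x"
  proof (intro ballI)
    fix x y assume x: "x \<in> MT" and y: "y \<in> TM - MT"
    have "ukey rk c x < ukey rk c y"
    proof (rule ccontr)
      assume "\<not> ukey rk c x < ukey rk c y"
      then have le: "ukey rk c y \<le> ukey rk c x" by simp
      have "{z\<in>TM. ukey rk c z < ukey rk c y} \<subseteq> {z\<in>TM. ukey rk c z < ukey rk c x}"
        using le by auto
      then have "card {z\<in>TM. ukey rk c z < ukey rk c y} \<le> card {z\<in>TM. ukey rk c z < ukey rk c x}"
        using fTM by (intro card_mono) auto
      then show False using x y unfolding MT_def by auto
    qed
    then have "c x \<le> c y" unfolding ukey_def by auto
    then show "g y \<le> g x" unfolding g_def by simp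
  qed
  have "0 \<le> sum g MT" using nn MTs by (intro sum_nonneg) auto
  moreover have "sum g MD \<le> sum g (MD \<inter> TM)"
  proof -
    have "sum g MD = sum g (MD \<inter> TM) + sum g (MD - TM)" using fMD by (metis sum.Int_Diff)
    moreover have "sum g (MD - TM) \<le> 0" using np by (intro sum_nonpos) auto
    ultimately show ?thesis by simp
  qed
  moreover have "sum g (MD \<inter> TM) \<le> sum g MT"
  proof (rule topN[OF fTM _ MTs _ dom nn])
    show "MD \<inter> TM \<subseteq> TM" by auto
    have "card (MD \<inter> TM) \<le> card MD" using fMD by (intro card_mono) auto
    moreover have "card (MD \<inter> TM) \<le> card TM" using fTM by (intro card_mono) auto
    ultimately show "card (MD \<inter> TM) \<le> card MT" unfolding cMT using cMD by simp
  qed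
  ultimately show ?thesis unfolding g_def by simp
qed

lemma if_helper: "0 \<le> a \<and> b \<le> a \<Longrightarrow> 0 \<le> (if C then 0 else a) \<and> (if C then 0 else b) \<le> (if C then (0::real) else a)"
  by auto

lemma med_part:
  fixes P :: "'u set" and c :: "'u \<Rightarrow> real" and med :: "'u \<Rightarrow> 'm" and M :: "'m set"
    and A :: "'a set" and \<alpha> :: real and rk :: "('u,'a) item \<Rightarrow> nat"
  assumes finP: "finite P" and finA: "finite A" and medP: "med ` P \<subseteq> M"
    and rkinj: "inj_on rk (Inl ` P \<union> Inr ` (A \<times> UNIV))"
    and alpha: "0 \<le> \<alpha>" and injM: "inj_on rankM M"
    and Pr: "Pr \<subseteq> P" and R: "R \<subseteq> {p\<in>P. med p = m}"
  shows "let PT = {p\<in>Pr. med p \<noteq> m} \<union> {p\<in>P. med p = m};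
               cT = (\<lambda>p. if med p = m then c p else cr p);
               PD = {p\<in>Pr. med p \<noteq> m} \<union> R;
               cD = (\<lambda>p. if med p = m then c' p else cr p);
               UT = med_utility rk \<alpha> med A rankM rankA sM sA PT cT capr vr c m;
               UD = med_utility rk \<alpha> med A rankM rankA sM sA PD cD capr vr c m
           in 0 \<le> UT \<and> UD \<le> UT"
proof -
  note T = med_gen[OF finP finA medP rkinj alpha injM Pr order_refl, where cm = c and c = c and cr = cr]
  note D = med_gen[OF finP finA medP rkinj alpha injM Pr R, where cm = c' and c = c and cr = cr]
  note I = med_ineq[OF finP rkinj R, where c = c and c' = c' and cr = cr]
  show ?thesis unfolding Let_def T D by (rule if_helper, rule I)
qed

lemma adv_gen:
  fixes P :: "'u set" and cr :: "'u \<Rightarrow> real" and med :: "'u \<Rightarrow> 'm"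
    and A :: "'a set" and \<alpha> :: real and rk :: "('u,'a) item \<Rightarrow> nat"
    and rankM :: "'m \<Rightarrow> nat" and rankA :: "'a \<Rightarrow> nat" and sM :: "'m \<Rightarrow> bool" and sA :: "'a \<Rightarrow> bool"
    and Pr :: "'u set" and capr :: "'a \<Rightarrow> nat" and vr :: "'a \<Rightarrow> real" and a :: 'a
    and ka :: nat and wa :: real
  assumes finP: "finite P" and finA: "finite A"
    and rkinj: "inj_on rk (Inl ` P \<union> Inr ` (A \<times> UNIV))"
    and alpha: "0 \<le> \<alpha>" and injA: "inj_on rankA A"
    and Pr: "Pr \<subseteq> P" and aA: "a \<in> A"
  defines "s0 \<equiv> sA a"
  defines "Bo \<equiv> {b\<in>slots A capr. sA (fst b) \<noteq> s0}"
  defines "L \<equiv> Sc rk cr vr {p\<in>Pr. sM (med p) \<noteq> s0} Bo"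
  defines "x \<equiv> (1 - 4 * root 3 \<alpha>) * real (length L)"
  defines "ph \<equiv> fst (L ! (nat \<lceil>x\<rceil> - 1))"
  defines "bh \<equiv> snd (L ! (nat \<lceil>x\<rceil> - 1))"
  defines "Kb \<equiv> bkey rk vr bh"
  defines "n \<equiv> length (sorted_key_list_of_set (\<lambda>p. (rankM (med p), ukey rk cr p)) {p\<in>Pr. sM (med p) = s0 \<and> ukey rk cr p < ukey rk cr ph})"
  defines "E \<equiv> card {y\<in>slots A capr. sA (fst y) = s0 \<and> Kb < bkey rk vr y \<and> rankA (fst y) < rankA a}"
  defines "BA \<equiv> {b\<in>slots A (capr(a := ka)). fst b = a \<and> Kb < bkey rk (vr(a := wa)) b}"
  shows "adv_count rk \<alpha> med A rankM rankA sM sA Pr cr (capr(a := ka)) (vr(a := wa)) a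
           = (if x \<le> 0 then 0 else min (n - E) (card BA))
      \<and> adv_charge rk \<alpha> med A rankM rankA sM sA Pr cr (capr(a := ka)) (vr(a := wa)) a
           = (if x \<le> 0 then 0 else real (min (n - E) (card BA)) * vr (fst bh))"
proof -
  define cp where "cp = capr(a := ka)"
  define vp where "vp = vr(a := wa)"
  define C where "C s = length (filter (\<lambda>(p, b). fst b = a) (fst (side_outcome rk \<alpha> med A rankM rankA sM sA Pr cr cp vp s)))" for s
  define D where "D s = (case side_outcome rk \<alpha> med A rankM rankA sM sA Pr cr cp vp s of
          (pairs, pay, charge) \<Rightarrow> real (length (filter (\<lambda>(p, b). fst b = a) pairs)) * charge)" for s
  have ac: "adv_count rk \<alpha> med A rankM rankA sM sA Pr cr cp vp a = C s0 + C (\<not> s0)"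
    unfolding adv_count_def C_def by (rule sum_bool_split)
  have ah: "adv_charge rk \<alpha> med A rankM rankA sM sA Pr cr cp vp a = D s0 + D (\<not> s0)"
    unfolding adv_charge_def D_def by (rule sum_bool_split)
  have F1: "filter (\<lambda>(p, b). fst b = a) (fst (side_outcome rk \<alpha> med A rankM rankA sM sA Pr cr cp vp (\<not> s0))) = []"
  proof -
    have "\<forall>z\<in>set (fst (side_outcome rk \<alpha> med A rankM rankA sM sA Pr cr cp vp (\<not> s0))). \<not> (case z of (p, b) \<Rightarrow> fst b = a)"
    proof
      fix z assume z: "z \<in> set (fst (side_outcome rk \<alpha> med A rankM rankA sM sA Pr cr cp vp (\<not> s0)))"
      obtain p b where zz: "z = (p, b)" by (cases z) blast
      have "(p, b) \<in> set (fst (side_outcome rk \<alpha> med A rankM rankA sM sA Pr cr cp vp (\<not> s0)))"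
        using z zz by simp
      then have "sA (fst b) = (\<not> s0)" by (rule conjunct2[OF side_pairs_slot[OF finA injA]])
      then have "fst b \<noteq> a" by (auto simp: s0_def)
      then show "\<not> (case z of (p, b) \<Rightarrow> fst b = a)" using zz by simp
    qed
    then show ?thesis by (rule filter_False)
  qed
  have C1: "C (\<not> s0) = 0" unfolding C_def F1 by simp
  have D1: "D (\<not> s0) = 0"
  proof -
    obtain pairs pay ch where so: "side_outcome rk \<alpha> med A rankM rankA sM sA Pr cr cp vp (\<not> s0) = (pairs, pay, ch)"
      by (cases "side_outcome rk \<alpha> med A rankM rankA sM sA Pr cr cp vp (\<not> s0)") auto
    show ?thesis using F1 unfolding D_def so by simp
  qed
  have fPr: "finite Pr" using Pr finP finite_subset by blast
  have fo: "finite {p\<in>Pr. sM (med p) \<noteq> s0}" using fPr by auto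
  have fBo: "finite Bo" unfolding Bo_def using slots_finite[OF finA] by auto
  have Boq: "{b\<in>slots A cp. sA (fst b) \<noteq> s0} = Bo"
    unfolding Bo_def cp_def slots_def s0_def by (auto split: if_splits)
  have iuo: "inj_on (ukey rk cr) {p\<in>Pr. sM (med p) \<noteq> s0}"
  proof -
    have sub: "{p\<in>Pr. sM (med p) \<noteq> s0} \<subseteq> P" using Pr by blast
    show ?thesis using ukey_inj[OF rkinj sub] .
  qed
  have BoA: "Bo \<subseteq> A \<times> UNIV" unfolding Bo_def using slots_sub[of A capr] by blast
  have Lq: "Sc rk cr vp {p\<in>Pr. sM (med p) \<noteq> s0} {b\<in>slots A cp. sA (fst b) \<noteq> s0} = L"
    unfolding Boq L_def
  proof (rule Sc_cong[OF fo fBo iuo])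
    show "inj_on (bkey rk vp) Bo" using bkey_inj[OF rkinj BoA] .
    show "\<forall>b\<in>Bo. vp (fst b) = vr (fst b)" unfolding Bo_def vp_def s0_def by auto
  qed auto
  have so: "side_outcome rk \<alpha> med A rankM rankA sM sA Pr cr cp vp s0 =
    (if x \<le> 0 then ([], 0, 0) else
      (zip (sorted_key_list_of_set (\<lambda>p. (rankM (med p), ukey rk cr p)) {p \<in> Pr. sM (med p) = s0 \<and> ukey rk cr p < ukey rk cr ph})
           (sorted_key_list_of_set (\<lambda>b. (rankA (fst b), snd b)) {b \<in> slots A cp. sA (fst b) = s0 \<and> bkey rk vp b > bkey rk vp bh}),
       cr ph, vp (fst bh)))"
    unfolding side_cases Lq x_def ph_def bh_def ..
  have main: "C s0 = (if x \<le> 0 then 0 else min (n - E) (card BA)) \<and> D s0 = (if x \<le> 0 then 0 else real (min (n - E) (card BA)) * vr (fst bh))"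
  proof (cases "x \<le> 0")
    case True then show ?thesis unfolding C_def D_def so by simp
  next
    case False
    have k1: "1 \<le> nat \<lceil>x\<rceil>" "nat \<lceil>x\<rceil> \<le> length L"
      using idx_range[OF alpha False[unfolded x_def]] unfolding x_def by auto
    have "L ! (nat \<lceil>x\<rceil> - 1) \<in> set L" using k1 by (intro nth_mem) linarith
    moreover have "set L \<subseteq> {p\<in>Pr. sM (med p) \<noteq> s0} \<times> Bo"
      unfolding L_def by (rule Sc_sub[OF fo fBo iuo bkey_inj[OF rkinj BoA]])
    ultimately have bhBo: "bh \<in> Bo" unfolding bh_def by auto
    then have abh: "fst bh \<noteq> a" unfolding Bo_def s0_def by auto
    have vpbh: "vp (fst bh) = vr (fst bh)" using abh unfolding vp_def by simp
    have Kbh: "bkey rk vp bh = Kb" unfolding Kb_def bkey_def vpbh ..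
    define QU where "QU = sorted_key_list_of_set (\<lambda>p. (rankM (med p), ukey rk cr p)) {p \<in> Pr. sM (med p) = s0 \<and> ukey rk cr p < ukey rk cr ph}"
    define Bh where "Bh = {b \<in> slots A cp. sA (fst b) = s0 \<and> Kb < bkey rk vp b}"
    define fb where "fb = (\<lambda>b::'a \<times> nat. (rankA (fst b), snd b))"
    have nq: "n = length QU" unfolding n_def QU_def ..
    have BhA: "Bh \<subseteq> A \<times> UNIV" unfolding Bh_def using slots_sub[of A cp] by blast
    have fBh: "finite Bh" unfolding Bh_def using slots_finite[OF finA] by auto
    have injBh: "inj_on fb Bh"
    proof (rule inj_onI)
      fix b1 b2 assume b: "b1 \<in> Bh" "b2 \<in> Bh" "fb b1 = fb b2"
      then have "fst b1 \<in> A" "fst b2 \<in> A" using BhA by auto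
      moreover have "rankA (fst b1) = rankA (fst b2)" "snd b1 = snd b2" using b(3) unfolding fb_def by auto
      ultimately have "fst b1 = fst b2" using injA inj_onD by metis
      then show "b1 = b2" using \<open>snd b1 = snd b2\<close> by (rule prod_eqI)
    qed
    have Cs: "C s0 = length (filter (\<lambda>(p, b). fst b = a) (zip QU (sorted_key_list_of_set fb Bh)))"
      unfolding C_def so QU_def Bh_def fb_def Kbh using False by simp
    also have "\<dots> = card {b\<in>set (take n (sorted_key_list_of_set fb Bh)). fst b = a}"
      unfolding nq by (rule len_zip_filter) (rule skl_props(2)[OF fBh injBh])
    also have "{b\<in>set (take n (sorted_key_list_of_set fb Bh)). fst b = a}
       = {z\<in>Bh. fst z = a \<and> card {y\<in>Bh. (rankA (fst y), snd y) < (rankA (fst z), snd z)} < n}"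
      by (subst skl_take[OF fBh injBh]) (auto simp: fb_def)
    also have "\<dots> = {z\<in>{w\<in>Bh. fst w = a}. card {y\<in>{w\<in>Bh. fst w = a}. snd y < snd z} < n - card {y\<in>Bh. rankA (fst y) < rankA a}}"
    proof (rule block_rank[OF fBh])
      have "fst ` Bh \<subseteq> A" using BhA by auto
      then show "inj_on rankA (fst ` Bh)" using injA inj_on_subset by blast
    qed
    also have "{w\<in>Bh. fst w = a} = BA"
      unfolding Bh_def BA_def cp_def vp_def s0_def by auto
    also have "card {y\<in>Bh. rankA (fst y) < rankA a} = E"
    proof -
      have "{y\<in>Bh. rankA (fst y) < rankA a} = {y\<in>slots A capr. sA (fst y) = s0 \<and> Kb < bkey rk vr y \<and> rankA (fst y) < rankA a}"
        unfolding Bh_def cp_def vp_def slots_def bkey_def by (auto split: if_splits)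
      then show ?thesis unfolding E_def by simp
    qed
    also have "card {z\<in>BA. card {y\<in>BA. snd y < snd z} < n - E} = min (n - E) (card BA)"
    proof (rule skl_take_card)
      show "finite BA" unfolding BA_def using slots_finite[OF finA] by auto
      show "inj_on snd BA" unfolding BA_def inj_on_def by (auto simp: prod_eq_iff)
    qed
    finally have Ceq: "C s0 = min (n - E) (card BA)" .
    have "D s0 = real (C s0) * vr (fst bh)"
      unfolding D_def C_def so using False vpbh by simp
    then show ?thesis using Ceq False by simp
  qed
  show ?thesis using ac ah C1 D1 main unfolding cp_def vp_def by simp
qed

lemma adv_if:
  "0 \<le> adv_utility ua va cT (real cT * ch) \<and> adv_utility ua va cD (real cD * ch) \<le> adv_utility ua va cT (real cT * ch) \<Longrightarrow>
   0 \<le> adv_utility ua va (if X then 0 else cT) (if X then 0 else real cT * ch) \<and>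
   adv_utility ua va (if X then 0 else cD) (if X then 0 else real cD * ch) \<le> adv_utility ua va (if X then 0 else cT) (if X then 0 else real cT * ch)"
  by (cases X) (auto simp: adv_utility_def)

lemma adv_ineq:
  fixes rk :: "('u,'a) item \<Rightarrow> nat" and vr :: "'a \<Rightarrow> real" and capr :: "'a \<Rightarrow> nat"
    and A :: "'a set" and a :: 'a and bh :: "'a \<times> nat" and N ua ka :: nat and va wa :: real
  assumes aA: "a \<in> A"
  defines "Kb \<equiv> bkey rk vr bh"
  defines "BT \<equiv> {b\<in>slots A (capr(a := ua)). fst b = a \<and> Kb < bkey rk (vr(a := va)) b}"
  defines "BD \<equiv> {b\<in>slots A (capr(a := ka)). fst b = a \<and> Kb < bkey rk (vr(a := wa)) b}"
  defines "cT \<equiv> min N (card BT)"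
  defines "cD \<equiv> min N (card BD)"
  shows "0 \<le> adv_utility ua va cT (real cT * vr (fst bh)) \<and>
     adv_utility ua va cD (real cD * vr (fst bh)) \<le> adv_utility ua va cT (real cT * vr (fst bh))"
proof -
  define ch where "ch = vr (fst bh)"
  have Kbf: "Kb = (ch, rk (Inr bh))" unfolding Kb_def bkey_def ch_def ..
  have BTs: "BT \<subseteq> (\<lambda>j. (a, j)) ` {..<ua}"
    unfolding BT_def slots_def by auto
  have "card BT \<le> card ((\<lambda>j. (a, j)) ` {..<ua})" using BTs by (intro card_mono) auto
  also have "\<dots> \<le> ua" using card_image_le[of "{..<ua}" "\<lambda>j. (a, j)"] by simp
  finally have cBT: "card BT \<le> ua" .
  have cTu: "cT \<le> ua" using cBT unfolding cT_def by simp
  have UT: "adv_utility ua va cT (real cT * ch) = ereal (real cT * (va - ch))"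
    using cTu unfolding adv_utility_def by (simp add: algebra_simps)
  show ?thesis unfolding ch_def[symmetric]
  proof (cases "ch < va")
    case True
    have "BT = (\<lambda>j. (a, j)) ` {..<ua}"
    proof
      show "BT \<subseteq> (\<lambda>j. (a, j)) ` {..<ua}" by (rule BTs)
      show "(\<lambda>j. (a, j)) ` {..<ua} \<subseteq> BT"
        unfolding BT_def slots_def Kbf bkey_def using aA True by auto
    qed
    then have "card BT = ua" by (simp add: card_image inj_on_def)
    then have cTe: "cT = min N ua" unfolding cT_def by simp
    have "0 \<le> real cT * (va - ch)" using True by simp
    moreover have "adv_utility ua va cD (real cD * ch) \<le> ereal (real cT * (va - ch))"
    proof (cases "cD \<le> ua")
      case True2: True
      have "cD \<le> N" unfolding cD_def by simp
      then have "cD \<le> cT" using True2 cTe by simp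
      then have "real cD * (va - ch) \<le> real cT * (va - ch)" using True by (intro mult_right_mono) auto
      then show ?thesis using True2 unfolding adv_utility_def by (simp add: algebra_simps)
    next
      case False
      then show ?thesis unfolding adv_utility_def by simp
    qed
    ultimately show "0 \<le> adv_utility ua va cT (real cT * ch) \<and>
      adv_utility ua va cD (real cD * ch) \<le> adv_utility ua va cT (real cT * ch)" unfolding UT by simp
  next
    case False
    have z: "real cT * (va - ch) = 0"
    proof (cases "BT = {}")
      case True then show ?thesis unfolding cT_def by simp
    next
      case False2: False
      then obtain b where "b \<in> BT" by auto
      then have "(ch, rk (Inr bh)) < (va, rk (Inr b))" unfolding BT_def Kbf bkey_def by auto
      then have "ch \<le> va" by auto
      then have "va = ch" using False by simp
      then show ?thesis by simp
    qed
    have "adv_utility ua va cD (real cD * ch) \<le> 0"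
    proof (cases "cD \<le> ua")
      case True
      have "real cD * (va - ch) \<le> 0" using False by (simp add: mult_nonneg_nonpos)
      then show ?thesis using True unfolding adv_utility_def by (simp add: algebra_simps)
    next
      case False
      then show ?thesis unfolding adv_utility_def by simp
    qed
    then show "0 \<le> adv_utility ua va cT (real cT * ch) \<and>
      adv_utility ua va cD (real cD * ch) \<le> adv_utility ua va cT (real cT * ch)" unfolding UT z by (simp add: zero_ereal_def)
  qed
qed

lemma adv_part:
  fixes P :: "'u set" and med :: "'u \<Rightarrow> 'm"
    and A :: "'a set" and \<alpha> :: real and rk :: "('u,'a) item \<Rightarrow> nat" and u :: "'a \<Rightarrow> nat" and v :: "'a \<Rightarrow> real"
  assumes finP: "finite P" and finA: "finite A"
    and rkinj: "inj_on rk (Inl ` P \<union> Inr ` (A \<times> UNIV))"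
    and alpha: "0 \<le> \<alpha>" and injA: "inj_on rankA A"
    and Pr: "Pr \<subseteq> P" and aA: "a \<in> A"
  shows "let capT = capr(a := u a); vT = vr(a := v a);
               capD = capr(a := k); vD = vr(a := w);
               UT = adv_utility (u a) (v a)
                      (adv_count rk \<alpha> med A rankM rankA sM sA Pr cr capT vT a)
                      (adv_charge rk \<alpha> med A rankM rankA sM sA Pr cr capT vT a);
               UD = adv_utility (u a) (v a)
                      (adv_count rk \<alpha> med A rankM rankA sM sA Pr cr capD vD a)
                      (adv_charge rk \<alpha> med A rankM rankA sM sA Pr cr capD vD a)
           in 0 \<le> UT \<and> UD \<le> UT"
proof -
  note T = adv_gen[OF finP finA rkinj alpha injA Pr aA, where ka = "u a" and wa = "v a"]
  note D = adv_gen[OF finP finA rkinj alpha injA Pr aA, where ka = k and wa = w]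
  show ?thesis unfolding Let_def T[THEN conjunct1] T[THEN conjunct2] D[THEN conjunct1] D[THEN conjunct2]
    by (rule adv_if, rule adv_ineq[OF aA])
qed

theorem lemma21:
  fixes P :: "'u set" and c :: "'u \<Rightarrow> real" and med :: "'u \<Rightarrow> 'm" and M :: "'m set"
    and A :: "'a set" and u :: "'a \<Rightarrow> nat" and v :: "'a \<Rightarrow> real"
    and \<alpha> :: real and rk :: "('u,'a) item \<Rightarrow> nat"
  assumes "finite P" and "finite M" and "finite A"
    and "med ` P \<subseteq> M"
    and "\<forall>p\<in>P. c p \<ge> 0"
    and "\<forall>a\<in>A. u a \<ge> 1 \<and> v a \<ge> 0"
    and "inj_on rk (Inl ` P \<union> Inr ` (A \<times> UNIV))"
    and "length (Sc rk c v P (slots A u)) > 0"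
    and "1 / real (length (Sc rk c v P (slots A u))) \<le> \<alpha>" and "\<alpha> \<le> 1"
  shows
    "(\<forall>m\<in>M. \<forall>ML AL rankM rankA sM sA. valid_realization M A ML AL rankM rankA \<longrightarrow>
       (\<forall>Pr cr capr vr R c'.
          Pr \<subseteq> P \<and> (\<forall>a\<in>A. capr a \<ge> 1 \<and> vr a \<ge> 0) \<and> R \<subseteq> {p\<in>P. med p = m} \<longrightarrow>
          (let PT = {p\<in>Pr. med p \<noteq> m} \<union> {p\<in>P. med p = m};
               cT = (\<lambda>p. if med p = m then c p else cr p);
               PD = {p\<in>Pr. med p \<noteq> m} \<union> R;
               cD = (\<lambda>p. if med p = m then c' p else cr p);
               UT = med_utility rk \<alpha> med A rankM rankA sM sA PT cT capr vr c m;
               UD = med_utility rk \<alpha> med A rankM rankA sM sA PD cD capr vr c m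
           in 0 \<le> UT \<and> UD \<le> UT)))
   \<and>
    (\<forall>a\<in>A. \<forall>ML AL rankM rankA sM sA. valid_realization M A ML AL rankM rankA \<longrightarrow>
       (\<forall>Pr cr capr vr k w.
          Pr \<subseteq> P \<and> (\<forall>a'\<in>A. capr a' \<ge> 1 \<and> vr a' \<ge> 0) \<and> k \<ge> 1 \<and> w \<ge> 0 \<longrightarrow>
          (let capT = capr(a := u a); vT = vr(a := v a);
               capD = capr(a := k); vD = vr(a := w);
               UT = adv_utility (u a) (v a)
                      (adv_count rk \<alpha> med A rankM rankA sM sA Pr cr capT vT a)
                      (adv_charge rk \<alpha> med A rankM rankA sM sA Pr cr capT vT a);
               UD = adv_utility (u a) (v a)
                      (adv_count rk \<alpha> med A rankM rankA sM sA Pr cr capD vD a)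
                      (adv_charge rk \<alpha> med A rankM rankA sM sA Pr cr capD vD a)
           in 0 \<le> UT \<and> UD \<le> UT)))"
proof -
  have lenpos: "0 < real (length (Sc rk c v P (slots A u)))" using assms(8) by simp
  have alpha: "0 \<le> \<alpha>"
  proof -
    have "0 < 1 / real (length (Sc rk c v P (slots A u)))" using lenpos by simp
    then show ?thesis using assms(9) by linarith
  qed
  show ?thesis
  proof (intro conjI ballI allI impI)
    fix m :: 'm and ML0 :: "'m set" and AL0 :: "'a set" and rankM :: "'m \<Rightarrow> nat" and rankA :: "'a \<Rightarrow> nat"
      and sM :: "'m \<Rightarrow> bool" and sA :: "'a \<Rightarrow> bool" and Pr :: "'u set" and cr :: "'u \<Rightarrow> real"
      and capr :: "'a \<Rightarrow> nat" and vr :: "'a \<Rightarrow> real" and R :: "'u set" and c' :: "'u \<Rightarrow> real"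
    assume m: "m \<in> M" and vr: "valid_realization M A ML0 AL0 rankM rankA"
      and h: "Pr \<subseteq> P \<and> (\<forall>a\<in>A. capr a \<ge> 1 \<and> vr a \<ge> 0) \<and> R \<subseteq> {p\<in>P. med p = m}"
    have injM: "inj_on rankM M" using vr unfolding valid_realization_def by simp
    show "let PT = {p\<in>Pr. med p \<noteq> m} \<union> {p\<in>P. med p = m};
               cT = (\<lambda>p. if med p = m then c p else cr p);
               PD = {p\<in>Pr. med p \<noteq> m} \<union> R;
               cD = (\<lambda>p. if med p = m then c' p else cr p);
               UT = med_utility rk \<alpha> med A rankM rankA sM sA PT cT capr vr c m;
               UD = med_utility rk \<alpha> med A rankM rankA sM sA PD cD capr vr c m
           in 0 \<le> UT \<and> UD \<le> UT"
      by (rule med_part[OF assms(1) assms(3) assms(4) assms(7) alpha injM]) (use h in auto)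
  next
    fix a :: 'a and ML0 :: "'m set" and AL0 :: "'a set" and rankM :: "'m \<Rightarrow> nat" and rankA :: "'a \<Rightarrow> nat"
      and sM :: "'m \<Rightarrow> bool" and sA :: "'a \<Rightarrow> bool" and Pr :: "'u set" and cr :: "'u \<Rightarrow> real"
      and capr :: "'a \<Rightarrow> nat" and vr :: "'a \<Rightarrow> real" and k :: nat and w :: real
    assume a: "a \<in> A" and vr: "valid_realization M A ML0 AL0 rankM rankA"
      and h: "Pr \<subseteq> P \<and> (\<forall>a'\<in>A. capr a' \<ge> 1 \<and> vr a' \<ge> 0) \<and> k \<ge> 1 \<and> w \<ge> 0"
    have injA: "inj_on rankA A" using vr unfolding valid_realization_def by simp
    have Pr: "Pr \<subseteq> P" using h by simp
    show "let capT = capr(a := u a); vT = vr(a := v a);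
               capD = capr(a := k); vD = vr(a := w);
               UT = adv_utility (u a) (v a)
                      (adv_count rk \<alpha> med A rankM rankA sM sA Pr cr capT vT a)
                      (adv_charge rk \<alpha> med A rankM rankA sM sA Pr cr capT vT a);
               UD = adv_utility (u a) (v a)
                      (adv_count rk \<alpha> med A rankM rankA sM sA Pr cr capD vD a)
                      (adv_charge rk \<alpha> med A rankM rankA sM sA Pr cr capD vD a)
           in 0 \<le> UT \<and> UD \<le> UT"
      by (rule adv_part[OF assms(1) assms(3) assms(7) alpha injA Pr a])
  qed
qed

end
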